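(* Let $\rho$ be a set function on subsets of $\{1,\ldots,r\}$ that is subadditive, monotone increasing, and satisfies $\rho(I)=0$ iff $I=\emptyset$, and let $\lambda_\rho=\min\{\lceil\max_S\rho(S)/\min_{S\neq\emptyset}\rho(S)\rceil,\ r\}$. For any collection $\mathcal A$ of nonempty subsets of $\{1,\ldots,r\}$, there exists a subcollection $\widehat{\mathcal A}\subseteq\mathcal A$ of size at most $\lambda_\rho$ such that $\rho\big(\bigcup_{A\in\mathcal A}A\big)\le\sum_{A\in\widehat{\mathcal A}}\rho(A)$.
   Context: Subadditive means $\rho(A\cup B)\le\rho(A)+\rho(B)$ for all sets $A,B$. *)

theory Defs
  imports Complex_Main
begin

definition subadditive_on :: "nat \<Rightarrow> (nat set \<Rightarrow> real) \<Rightarrow> bool" where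
  "subadditive_on r \<rho> \<longleftrightarrow>
     (\<forall>A B. A \<subseteq> {1..r} \<longrightarrow> B \<subseteq> {1..r} \<longrightarrow> \<rho> (A \<union> B) \<le> \<rho> A + \<rho> B)"

definition monotone_on_sets :: "nat \<Rightarrow> (nat set \<Rightarrow> real) \<Rightarrow> bool" where
  "monotone_on_sets r \<rho> \<longleftrightarrow>
     (\<forall>A B. A \<subseteq> B \<longrightarrow> B \<subseteq> {1..r} \<longrightarrow> \<rho> A \<le> \<rho> B)"

definition lambda_rho :: "nat \<Rightarrow> (nat set \<Rightarrow> real) \<Rightarrow> nat" where
  "lambda_rho r \<rho> =
     min (nat \<lceil>Max (\<rho> ` Pow {1..r}) / Min (\<rho> ` (Pow {1..r} - {{}}))\<rceil>) r"

end

theory Submission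
  imports Defs
begin

lemma subadd_fin:
  assumes "subadditive_on r \<rho>" "\<rho> {} = 0" "finite F" "\<forall>A\<in>F. A \<subseteq> {1..r}"
  shows "\<rho> (\<Union>F) \<le> (\<Sum>A\<in>F. \<rho> A)"
  using assms(3,4)
proof (induction F rule: finite_induct)
  case empty then show ?case using assms(2) by simp
next
  case (insert x F)
  have "\<rho> (\<Union>(insert x F)) = \<rho> (x \<union> \<Union>F)" by simp
  also have "\<dots> \<le> \<rho> x + \<rho> (\<Union>F)"
  proof -
    have "x \<subseteq> {1..r}" "\<Union>F \<subseteq> {1..r}" using insert.prems by auto
    thus ?thesis using assms(1) unfolding subadditive_on_def by simp
  qed
  also have "\<dots> \<le> \<rho> x + (\<Sum>A\<in>F. \<rho> A)" using insert by simp
  finally show ?case using insert by simp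
qed

theorem proposition6p6:
  fixes r :: nat and \<rho> :: "nat set \<Rightarrow> real" and \<A> :: "nat set set"
  assumes "subadditive_on r \<rho>"
    and "monotone_on_sets r \<rho>"
    and "\<forall>I. I \<subseteq> {1..r} \<longrightarrow> (\<rho> I = 0 \<longleftrightarrow> I = {})"
    and "\<forall>A\<in>\<A>. A \<noteq> {} \<and> A \<subseteq> {1..r}"
  shows "\<exists>\<A>'. \<A>' \<subseteq> \<A> \<and> card \<A>' \<le> lambda_rho r \<rho> \<and>
           \<rho> (\<Union>\<A>) \<le> (\<Sum>A\<in>\<A>'. \<rho> A)"
proof -
  have r0: "\<rho> {} = 0" using assms(3) by simp
  have nn: "\<rho> A \<ge> 0" if "A \<subseteq> {1..r}" for A
    proof -
    have "\<rho> {} \<le> \<rho> A" using assms(2) that unfolding monotone_on_sets_def by blast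
    thus ?thesis using r0 by simp
  qed
  have Uin: "\<Union>\<A> \<subseteq> {1..r}" using assms(4) by blast
  define f where "f x = (SOME A. A \<in> \<A> \<and> x \<in> A)" for x
  have fx: "f x \<in> \<A> \<and> x \<in> f x" if "x \<in> \<Union>\<A>" for x
    unfolding f_def using that using someI_ex[of "\<lambda>A. A \<in> \<A> \<and> x \<in> A"] by blast
  define A1 where "A1 = f ` \<Union>\<A>"
  have A1sub: "A1 \<subseteq> \<A>" using fx A1_def by auto
  have finU: "finite (\<Union>\<A>)" using Uin finite_subset by blast
  have finA1: "finite A1" using A1_def finU by simp
  have cardA1: "card A1 \<le> r"
  proof -
    have "card A1 \<le> card (\<Union>\<A>)" unfolding A1_def by (rule card_image_le[OF finU])
    also have "\<dots> \<le> card {1..r}" by (rule card_mono[OF _ Uin]) simp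
    finally show ?thesis by simp
  qed
  have UA1: "\<Union>A1 = \<Union>\<A>"
    using fx A1sub unfolding A1_def by blast
  have A1r: "\<forall>A\<in>A1. A \<subseteq> {1..r}" using A1sub assms(4) by blast
  have bound1: "\<rho> (\<Union>\<A>) \<le> (\<Sum>A\<in>A1. \<rho> A)"
    using subadd_fin[OF assms(1) r0 finA1 A1r] UA1 by simp
  define M where "M = Max (\<rho> ` Pow {1..r})"
  define m where "m = Min (\<rho> ` (Pow {1..r} - {{}}))"
  define k where "k = nat \<lceil>M / m\<rceil>"
  have lam: "lambda_rho r \<rho> = min k r" unfolding lambda_rho_def k_def M_def m_def by simp
  show ?thesis
  proof (cases "card A1 \<le> k")
    case True
    then have "card A1 \<le> lambda_rho r \<rho>" using cardA1 lam by simp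
    then show ?thesis using A1sub bound1 by blast
  next
    case False
    then have "k \<le> card A1" by simp
    then obtain A2 where A2: "A2 \<subseteq> A1" "card A2 = k" "finite A2"
      by (rule obtain_subset_with_card_n)
    have "A1 \<noteq> {}" using False by auto
    then obtain B where "B \<in> \<A>" using A1sub by blast
    hence Bne: "B \<in> Pow {1..r} - {{}}" using assms(4) by auto
    have finP: "finite (\<rho> ` (Pow {1..r} - {{}}))" by simp
    have mle: "m \<le> \<rho> A" if "A \<in> A2" for A
      unfolding m_def apply (rule Min_le[OF finP])
      using that A2(1) A1sub assms(4) by auto
    have mpos: "m > 0"
    proof -
      have "m \<in> \<rho> ` (Pow {1..r} - {{}})" unfolding m_def
        apply (rule Min_in[OF finP]) using Bne by blast
      then obtain C where "C \<subseteq> {1..r}" "C \<noteq> {}" "m = \<rho> C" by auto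
      moreover have "\<rho> C \<noteq> 0" using assms(3) \<open>C \<subseteq> {1..r}\<close> \<open>C \<noteq> {}\<close> by blast
      moreover have "\<rho> C \<ge> 0" using nn \<open>C \<subseteq> {1..r}\<close> by blast
      ultimately show ?thesis by linarith
    qed
    have "\<rho> (\<Union>\<A>) \<le> M" unfolding M_def by (rule Max_ge) (use Uin in auto)
    also have "M \<le> real k * m"
    proof -
      have "M / m \<le> real k" unfolding k_def by (rule real_nat_ceiling_ge)
      thus ?thesis using mpos by (simp add: divide_le_eq)
    qed
    also have "real k * m = (\<Sum>A\<in>A2. m)" using A2 by simp
    also have "\<dots> \<le> (\<Sum>A\<in>A2. \<rho> A)" using mle by (rule sum_mono)
    finally have "\<rho> (\<Union>\<A>) \<le> (\<Sum>A\<in>A2. \<rho> A)" .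
    moreover have "card A2 \<le> min k r" using A2 cardA1 False by auto
    ultimately have "A2 \<subseteq> \<A> \<and> card A2 \<le> lambda_rho r \<rho> \<and> \<rho> (\<Union>\<A>) \<le> (\<Sum>A\<in>A2. \<rho> A)"
      using A2(1) A1sub lam by auto
    then show ?thesis by blast
  qed
qed

end
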